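(* Let $G$ be a twin-free graph and let $t\ge 1$. (i) If $G=K_1$, then $\det(G)=0$ and $\det(\mu_t(G))=t$. (ii) If $G=H+K_1$ (disjoint union with one isolated vertex) for some graph $H$ with at least one edge, then $\det(\mu_t(G))=\det(G)+t-1$.
   Context: All graphs are finite and simple. For a graph $G$ with $V(G)=\{v_1,\dots,v_n\}$ and an integer $t\ge1$, the generalized Mycielskian $\mu_t(G)$ has vertex set $\{u_i^s: 1\le i\le n,\ 0\le s\le t\}\cup\{w\}$, where $u_i^0$ is identified with $v_i$. Its edges are: $u_i^0u_j^0$ for each edge $v_iv_j$ of $G$; $u_i^su_j^{s+1}$ and $u_j^su_i^{s+1}$ for each edge $v_iv_j$ of $G$ and each $0\le s<t$; and $u_i^tw$ for all $1\le i\le n$. A set $S\subseteq V(G)$ is a determining set for $G$ if the only automorphism of $G$ fixing every vertex of $S$ is the identity; $\det(G)$ is the minimum size of a determining set. Two vertices are twins if they have the same open neighborhood; $G$ is twin-free if it has no pair of distinct twin vertices. *)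

theory Defs
  imports Main
begin

type_synonym 'a graph = "'a set \<times> 'a set set"

definition verts :: "'a graph \<Rightarrow> 'a set" where "verts G = fst G"
definition edges :: "'a graph \<Rightarrow> 'a set set" where "edges G = snd G"

definition simple_graph :: "'a graph \<Rightarrow> bool" where
  "simple_graph G \<longleftrightarrow> finite (verts G) \<and>
     (\<forall>e\<in>edges G. \<exists>x y. e = {x, y} \<and> x \<noteq> y \<and> x \<in> verts G \<and> y \<in> verts G)"

definition adj :: "'a graph \<Rightarrow> 'a \<Rightarrow> 'a \<Rightarrow> bool" where
  "adj G x y \<longleftrightarrow> {x, y} \<in> edges G"

definition open_nbhd :: "'a graph \<Rightarrow> 'a \<Rightarrow> 'a set" where
  "open_nbhd G x = {y \<in> verts G. adj G x y}"

definition twin_free :: "'a graph \<Rightarrow> bool" where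
  "twin_free G \<longleftrightarrow> (\<forall>x\<in>verts G. \<forall>y\<in>verts G. x \<noteq> y \<longrightarrow> open_nbhd G x \<noteq> open_nbhd G y)"

definition automorphism :: "'a graph \<Rightarrow> ('a \<Rightarrow> 'a) \<Rightarrow> bool" where
  "automorphism G f \<longleftrightarrow> bij_betw f (verts G) (verts G) \<and>
     (\<forall>x\<in>verts G. \<forall>y\<in>verts G. adj G (f x) (f y) \<longleftrightarrow> adj G x y)"

definition determining_set :: "'a graph \<Rightarrow> 'a set \<Rightarrow> bool" where
  "determining_set G S \<longleftrightarrow> S \<subseteq> verts G \<and>
     (\<forall>f. automorphism G f \<longrightarrow> (\<forall>x\<in>S. f x = x) \<longrightarrow> (\<forall>x\<in>verts G. f x = x))"

definition det_num :: "'a graph \<Rightarrow> nat" where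
  "det_num G = (LEAST n. \<exists>S. determining_set G S \<and> card S = n)"

text \<open>Generalized Mycielskian: vertex u_i^s is Some (v_i, s), the root w is None.\<close>
definition mycielskian :: "nat \<Rightarrow> 'a graph \<Rightarrow> ('a \<times> nat) option graph" where
  "mycielskian t G =
    ({Some (v, s) | v s. v \<in> verts G \<and> s \<le> t} \<union> {None},
     {{Some (x, 0), Some (y, 0)} | x y. {x, y} \<in> edges G}
     \<union> {{Some (x, s), Some (y, Suc s)} | x y s. {x, y} \<in> edges G \<and> s < t}
     \<union> {{Some (x, t), None} | x. x \<in> verts G})"

end

theory Submission
  imports Defs
begin



lemma verts_myc: "verts (mycielskian t G) = Some ` (verts G \<times> {..t}) \<union> {None}"
  unfolding mycielskian_def verts_def by auto

lemma adj_myc_SS: "adj (mycielskian t G) (Some (x,s)) (Some (y,r)) \<longleftrightarrow>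
   {x,y} \<in> edges G \<and> ((s = 0 \<and> r = 0) \<or> (r = Suc s \<and> s < t) \<or> (s = Suc r \<and> r < t))"
  unfolding adj_def mycielskian_def edges_def
  by (auto simp: doubleton_eq_iff insert_commute)

lemma adj_myc_SN: "adj (mycielskian t G) (Some (x,s)) None \<longleftrightarrow> s = t \<and> x \<in> verts G"
  unfolding adj_def mycielskian_def edges_def
  by (auto simp: doubleton_eq_iff insert_commute)

lemma adj_myc_NS: "adj (mycielskian t G) None (Some (x,s)) \<longleftrightarrow> s = t \<and> x \<in> verts G"
  unfolding adj_def mycielskian_def edges_def
  by (auto simp: doubleton_eq_iff insert_commute)

lemma adj_myc_NN: "\<not> adj (mycielskian t G) None None"
  unfolding adj_def mycielskian_def edges_def
  by (auto simp: doubleton_eq_iff insert_commute)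




lemma simple_edge: "simple_graph G \<Longrightarrow> {x,y} \<in> edges G \<Longrightarrow> x \<noteq> y \<and> x \<in> verts G \<and> y \<in> verts G"
  unfolding simple_graph_def by (metis doubleton_eq_iff)

lemma adj_sym: "adj G x y \<longleftrightarrow> adj G y x"
  unfolding adj_def by (simp add: insert_commute)

lemma simple_noloop: "simple_graph G \<Longrightarrow> {x} \<notin> edges G"
  using simple_edge[of G x x] by auto

lemma myc_noloop: "simple_graph G \<Longrightarrow> \<not> adj (mycielskian t G) x x"
  by (cases x) (auto simp: adj_myc_SS adj_myc_NN dest: simple_noloop)

lemma finite_myc: "simple_graph G \<Longrightarrow> finite (verts (mycielskian t G))"
  unfolding verts_myc simple_graph_def by auto

lemma det_le: "determining_set G S \<Longrightarrow> det_num G \<le> card S"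
  unfolding det_num_def by (rule Least_le) blast

lemma det_ex: "\<exists>S. determining_set G S \<and> card S = det_num G"
proof -
  have "determining_set G (verts G)" unfolding determining_set_def by auto
  then have "\<exists>n S. determining_set G S \<and> card S = n" by blast
  from LeastI_ex[OF this] show ?thesis unfolding det_num_def .
qed

lemma card_le1_miss:
  assumes "finite I" "\<And>i j. i \<in> I - S \<Longrightarrow> j \<in> I - S \<Longrightarrow> i = j"
  shows "card I \<le> card (I \<inter> S) + 1"
proof -
  have "card (I - S) \<le> Suc 0" using assms by (subst card_le_Suc0_iff_eq) auto
  moreover have "card I = card (I \<inter> S) + card (I - S)"
    using assms(1) by (metis card_Int_Diff)
  ultimately show ?thesis by linarith
qed






definition swp :: "'b \<Rightarrow> 'b \<Rightarrow> 'b \<Rightarrow> 'b" where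
  "swp a b x = (if x = a then b else if x = b then a else x)"

lemma swp_adj:
  assumes "\<not> adj G a a" "\<not> adj G b b"
    and same: "\<And>y. y \<in> verts G \<Longrightarrow> y \<noteq> a \<Longrightarrow> y \<noteq> b \<Longrightarrow> adj G a y \<longleftrightarrow> adj G b y"
    and "x \<in> verts G" "y \<in> verts G"
  shows "adj G (swp a b x) (swp a b y) \<longleftrightarrow> adj G x y"
proof -
  have sa: "adj G y a \<longleftrightarrow> adj G y b" if "y \<in> verts G" "y \<noteq> a" "y \<noteq> b" for y
    using same[OF that] adj_sym[of G y a] adj_sym[of G y b] by simp
  have ab: "adj G a b \<longleftrightarrow> adj G b a" by (rule adj_sym)
  show ?thesis
    apply (cases "x = a"; cases "x = b"; cases "y = a"; cases "y = b")
    using assms(1,2,4,5) ab same[of y] sa[of x] by (simp_all add: swp_def)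
qed

lemma swap_aut:
  assumes "a \<in> verts G" "b \<in> verts G" "\<And>x. \<not> adj G x x"
    and "\<And>y. y \<in> verts G \<Longrightarrow> y \<noteq> a \<Longrightarrow> y \<noteq> b \<Longrightarrow> adj G a y \<longleftrightarrow> adj G b y"
  shows "automorphism G (swp a b)"
proof -
  have inv: "swp a b (swp a b x) = x" for x by (simp add: swp_def)
  then have inj: "inj (swp a b)" by (metis injI)
  have sub: "swp a b ` verts G \<subseteq> verts G" using assms(1,2) by (auto simp: swp_def)
  have im: "swp a b ` verts G = verts G"
  proof
    show "verts G \<subseteq> swp a b ` verts G"
    proof
      fix x assume x: "x \<in> verts G"
      have "swp a b x \<in> verts G" using x sub by blast
      then show "x \<in> swp a b ` verts G" using inv[of x] by (metis image_eqI)
    qed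
  qed (rule sub)
  have "\<forall>x\<in>verts G. \<forall>y\<in>verts G. adj G (swp a b x) (swp a b y) \<longleftrightarrow> adj G x y"
    using swp_adj[of G a b] assms(3,4) by blast
  moreover have "inj_on (swp a b) (verts G)" using inj by (simp add: inj_on_def inj_def)
  ultimately show ?thesis unfolding automorphism_def bij_betw_def using im by blast
qed

lemma swap_det:
  assumes "determining_set G S" "a \<in> verts G" "b \<in> verts G" "a \<notin> S" "b \<notin> S" "a \<noteq> b"
    "\<And>x. \<not> adj G x x"
    "\<And>y. y \<in> verts G \<Longrightarrow> y \<noteq> a \<Longrightarrow> y \<noteq> b \<Longrightarrow> adj G a y \<longleftrightarrow> adj G b y"
  shows False
proof -
  have A: "automorphism G (swp a b)" using swap_aut[of a G b] assms(2,3,7,8) by blast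
  have B: "\<forall>x\<in>S. swp a b x = x" using assms(4,5) by (auto simp: swp_def)
  have "\<forall>x\<in>verts G. swp a b x = x" using assms(1) A B unfolding determining_set_def by blast
  then have "swp a b a = a" using assms(2) by blast
  then show False using assms(6) by (simp add: swp_def)
qed




lemma upper_fix:
  fixes G :: "'a graph" and \<sigma> :: "('a \<times> nat) option \<Rightarrow> ('a \<times> nat) option"
  assumes simple: "simple_graph G" and tf: "twin_free G" and z: "z \<in> verts G"
    and zi: "\<forall>e\<in>edges G. z \<notin> e" and ne: "edges G \<noteq> {}" and t: "1 \<le> t"
    and D: "determining_set G D"
    and aut: "automorphism (mycielskian t G) \<sigma>"
    and fixS: "\<forall>x\<in>Some ` ((D - {z}) \<times> {0}) \<union> Some ` ({z} \<times> {1..<t}). \<sigma> x = x"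
  shows "\<forall>x\<in>verts (mycielskian t G). \<sigma> x = x"
proof -
  define M where "M = mycielskian t G"
  define VH where "VH = verts G - {z}"
  define L where "L j = Some ` (VH \<times> {j})" for j :: nat
  have VM: "verts M = Some ` (verts G \<times> {..t}) \<union> {None}" unfolding M_def by (rule verts_myc)
  have memS: "Some (v,s) \<in> verts M \<longleftrightarrow> v \<in> verts G \<and> s \<le> t" for v s unfolding VM by auto
  have memN: "None \<in> verts M" unfolding VM by auto
  have finG: "finite (verts G)" using simple unfolding simple_graph_def by auto
  have finM: "finite (verts M)" unfolding M_def using simple by (rule finite_myc)
  have bij: "bij_betw \<sigma> (verts M) (verts M)"
    and ap: "\<And>x y. x \<in> verts M \<Longrightarrow> y \<in> verts M \<Longrightarrow> adj M (\<sigma> x) (\<sigma> y) \<longleftrightarrow> adj M x y"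
    using aut unfolding M_def automorphism_def by auto
  have inj: "inj_on \<sigma> (verts M)" and img: "\<sigma> ` verts M = verts M" using bij by (auto simp: bij_betw_def)
  have injD: "\<And>x y. x \<in> verts M \<Longrightarrow> y \<in> verts M \<Longrightarrow> \<sigma> x = \<sigma> y \<Longrightarrow> x = y"
    using inj by (meson inj_onD)
  have inM: "\<And>x. x \<in> verts M \<Longrightarrow> \<sigma> x \<in> verts M" using img by blast
  have SS: "adj M (Some (x,s)) (Some (y,r)) \<longleftrightarrow> {x,y} \<in> edges G \<and> ((s = 0 \<and> r = 0) \<or> (r = Suc s \<and> s < t) \<or> (s = Suc r \<and> r < t))" for x s y r
    unfolding M_def by (rule adj_myc_SS)
  have SN: "adj M (Some (x,s)) None \<longleftrightarrow> s = t \<and> x \<in> verts G" for x s unfolding M_def by (rule adj_myc_SN)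
  have NS: "adj M None (Some (x,s)) \<longleftrightarrow> s = t \<and> x \<in> verts G" for x s unfolding M_def by (rule adj_myc_NS)
  have NN: "\<not> adj M None None" unfolding M_def by (rule adj_myc_NN)
  have ez: "{z,y} \<notin> edges G" "{y,z} \<notin> edges G" for y using zi by auto
  have VHG: "v \<in> VH \<Longrightarrow> v \<in> verts G \<and> v \<noteq> z" for v unfolding VH_def by auto
  have nb: "\<exists>y\<in>VH. {v,y} \<in> edges G" if v: "v \<in> VH" for v
  proof (rule ccontr)
    assume nv: "\<not> (\<exists>y\<in>VH. {v,y} \<in> edges G)"
    have "open_nbhd G v = {}"
    proof -
      have "\<not> adj G v y" if "y \<in> verts G" for y
      proof
        assume "adj G v y"
        then have e: "{v,y} \<in> edges G" unfolding adj_def .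
        then have "y \<noteq> z" using ez by blast
        then show False using nv e that unfolding VH_def by blast
      qed
      then show ?thesis unfolding open_nbhd_def by auto
    qed
    moreover have "open_nbhd G z = {}" unfolding open_nbhd_def adj_def using ez by auto
    ultimately show False using tf VHG[OF v] z unfolding twin_free_def by metis
  qed
  obtain a0 where a0: "a0 \<in> VH"
  proof -
    obtain e where e: "e \<in> edges G" using ne by blast
    then obtain x y where "e = {x,y}" "x \<in> verts G" using simple unfolding simple_graph_def by blast
    moreover have "x \<noteq> z" using zi e calculation by blast
    ultimately show ?thesis using that unfolding VH_def by blast
  qed
  define P where "P = Some (z,t)"
  have PM: "P \<in> verts M" unfolding P_def memS using z by simp
  have Pnb: "y = None" if "y \<in> verts M" "adj M P y" for y
  proof (cases y)
    case (Some p) then obtain u r where "y = Some (u,r)" by (cases p) auto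
    then show ?thesis using that(2) ez by (simp add: P_def SS)
  qed simp
  have q1: "y = \<sigma> None" if "y \<in> verts M" "adj M (\<sigma> P) y" for y
  proof -
    have "y \<in> \<sigma> ` verts M" using that(1) img by simp
    then obtain y' where y': "y' \<in> verts M" "y = \<sigma> y'" by (rule imageE) simp
    then have "adj M P y'" using ap[OF PM y'(1)] that(2) by simp
    then have "y' = None" using Pnb y'(1) by blast
    then show ?thesis using y' by simp
  qed
  have q0: "adj M (\<sigma> P) (\<sigma> None)" using ap[OF PM memN] SN z unfolding P_def by simp
  have two: "\<exists>y1 y2. y1 \<in> verts M \<and> y2 \<in> verts M \<and> y1 \<noteq> y2 \<and> adj M q y1 \<and> adj M q y2"
    if q: "q \<in> verts M" "q \<noteq> P" "adj M q w" for q w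
  proof (cases q)
    case None
    then show ?thesis
      apply (rule_tac x=P in exI, rule_tac x="Some (a0,t)" in exI)
      using PM a0 VHG[OF a0] memS NS z unfolding P_def by auto
  next
    case (Some p)
    then obtain u r where qu: "q = Some (u,r)" by (cases p) auto
    then have u: "u \<in> verts G" "r \<le> t" using q(1) memS by auto
    show ?thesis
    proof (cases "u = z")
      case True
      then have "r \<noteq> t" using q(2) qu unfolding P_def by auto
      moreover have "\<not> adj M q y" for y
        using True qu ez calculation by (cases y) (auto simp: SS SN)
      ultimately show ?thesis using q(3) by blast
    next
      case False
      then have uH: "u \<in> VH" using u unfolding VH_def by auto
      obtain y where y: "y \<in> VH" "{u,y} \<in> edges G" using nb[OF uH] by blast
      have yG: "y \<in> verts G" using VHG[OF y(1)] by simp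
      show ?thesis
      proof (cases "r = t")
        case True
        show ?thesis
          apply (rule_tac x=None in exI, rule_tac x="Some (y, t - 1)" in exI)
          using True qu u y yG memS memN t by (auto simp: SN SS)
      next
        case False
        then have rt: "r < t" using u by simp
        show ?thesis
        proof (cases r)
          case 0
          show ?thesis
            apply (rule_tac x="Some (y, 1)" in exI, rule_tac x="Some (y, 0)" in exI)
            using 0 qu u y yG memS t rt by (auto simp: SS)
        next
          case (Suc r')
          show ?thesis
            apply (rule_tac x="Some (y, Suc r)" in exI, rule_tac x="Some (y, r')" in exI)
            using Suc qu u y yG memS t rt by (auto simp: SS)
        qed
      qed
    qed
  qed
  have sP: "\<sigma> P = P"
  proof (rule ccontr)
    assume "\<sigma> P \<noteq> P"
    then obtain y1 y2 where "y1 \<in> verts M" "y2 \<in> verts M" "y1 \<noteq> y2" "adj M (\<sigma> P) y1" "adj M (\<sigma> P) y2"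
      using two[OF inM[OF PM] _ q0] by blast
    then show False using q1 by metis
  qed
  have sN: "\<sigma> None = None" using q0 sP Pnb inM[OF memN] by simp
  have LM: "L j \<subseteq> verts M" if "j \<le> t" for j using that VHG unfolding L_def memS by (auto simp: memS)
  have finL: "finite (L j)" for j unfolding L_def VH_def using finG by auto
  have onto: "\<sigma> ` L j = L j" if "\<sigma> ` L j \<subseteq> L j" "j \<le> t" for j
    using endo_inj_surj[OF finL that(1)] inj_on_subset[OF inj LM[OF that(2)]] by blast
  have top: "\<sigma> ` L t \<subseteq> L t"
  proof
    fix x assume "x \<in> \<sigma> ` L t"
    then obtain v where v: "v \<in> VH" "x = \<sigma> (Some (v,t))" unfolding L_def by auto
    have vM: "Some (v,t) \<in> verts M" using VHG[OF v(1)] memS by simp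
    have "adj M x None" using ap[OF vM memN] sN v VHG[OF v(1)] SN by simp
    moreover have xM: "x \<in> verts M" using inM[OF vM] v by simp
    ultimately obtain u where u: "x = Some (u,t)" "u \<in> verts G" using NN
      by (cases x) (auto simp: SN)
    have "u \<noteq> z"
    proof
      assume "u = z"
      then have "\<sigma> (Some (v,t)) = \<sigma> P" using sP u v unfolding P_def by simp
      then have "Some (v,t) = P" using injD[OF vM PM] by blast
      then show False using VHG[OF v(1)] unfolding P_def by simp
    qed
    then show "x \<in> L t" using u unfolding L_def VH_def by auto
  qed
  have step: "\<sigma> ` L s \<subseteq> L s" if st: "s < t" and o1: "\<sigma> ` L (Suc s) = L (Suc s)"
    and o2: "Suc (Suc s) \<le> t \<Longrightarrow> \<sigma> ` L (Suc (Suc s)) = L (Suc (Suc s))" for s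
  proof
    fix x assume "x \<in> \<sigma> ` L s"
    then obtain v where v: "v \<in> VH" "x = \<sigma> (Some (v,s))" unfolding L_def by auto
    have vM: "Some (v,s) \<in> verts M" using VHG[OF v(1)] memS st by simp
    have xM: "x \<in> verts M" using inM[OF vM] v by simp
    obtain y where y: "y \<in> VH" "{v,y} \<in> edges G" using nb[OF v(1)] by blast
    have yM: "Some (y, Suc s) \<in> verts M" using VHG[OF y(1)] memS st by simp
    have "\<sigma> (Some (y, Suc s)) \<in> L (Suc s)" using o1 y(1) unfolding L_def by blast
    then obtain y' where y': "y' \<in> VH" "\<sigma> (Some (y, Suc s)) = Some (y', Suc s)" unfolding L_def by auto
    have "adj M (Some (v,s)) (Some (y, Suc s))" using y SS st by simp
    then have adjx: "adj M x (Some (y', Suc s))" using ap[OF vM yM] v y' by simp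
    have "x \<noteq> None"
    proof
      assume "x = None"
      then have "\<sigma> (Some (v,s)) = \<sigma> None" using v sN by simp
      then show False using injD[OF vM memN] by simp
    qed
    then obtain u r where u: "x = Some (u,r)" by (cases x) auto
    have ur: "{u,y'} \<in> edges G" "r = s \<or> (r = Suc (Suc s) \<and> Suc s < t)" using adjx u SS by auto
    have uz: "u \<noteq> z" using ur(1) ez by blast
    have uG: "u \<in> verts G" using xM u memS by simp
    have "r \<noteq> Suc (Suc s)"
    proof
      assume r2: "r = Suc (Suc s)"
      then have "Suc (Suc s) \<le> t" using ur(2) by auto
      then have "x \<in> \<sigma> ` L (Suc (Suc s))" using o2 u r2 uz uG unfolding L_def VH_def by auto
      then obtain v2 where v2: "v2 \<in> VH" "x = \<sigma> (Some (v2, Suc (Suc s)))" unfolding L_def by auto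
      have "Some (v2, Suc (Suc s)) \<in> verts M" using VHG[OF v2(1)] memS r2 \<open>Suc (Suc s) \<le> t\<close> by simp
      then have "Some (v,s) = Some (v2, Suc (Suc s))" using injD[OF vM] v v2 by metis
      then show False by simp
    qed
    then have "r = s" using ur(2) by blast
    then show "x \<in> L s" using u uz uG unfolding L_def VH_def by auto
  qed
  have claim: "\<forall>j. j \<le> t \<and> t \<le> j + k \<longrightarrow> \<sigma> ` L j = L j" for k
  proof (induction k)
    case 0
    then show ?case using onto[OF top] by auto
  next
    case (Suc k)
    show ?case
    proof (intro allI impI)
      fix j assume j: "j \<le> t \<and> t \<le> j + Suc k"
      show "\<sigma> ` L j = L j"
      proof (cases "t \<le> j + k")
        case True then show ?thesis using Suc.IH j by blast
      next
        case False
        then have jt: "j < t" "t = Suc (j + k)" using j by auto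
        have o1: "\<sigma> ` L (Suc j) = L (Suc j)" using Suc.IH jt by auto
        have o2: "\<sigma> ` L (Suc (Suc j)) = L (Suc (Suc j))" if "Suc (Suc j) \<le> t"
          using Suc.IH jt that by auto
        show ?thesis using onto[OF step[OF jt(1) o1 o2]] jt by simp
      qed
    qed
  qed
  have ontoall: "\<sigma> ` L j = L j" if "j \<le> t" for j using claim[of t] that by auto
  have l0: "\<exists>v'\<in>VH. \<sigma> (Some (v,0)) = Some (v',0)" if "v \<in> VH" for v
    using ontoall[of 0] that unfolding L_def by blast
  define \<phi> where "\<phi> v = (if v \<in> VH then fst (the (\<sigma> (Some (v,0)))) else v)" for v
  have phi1: "\<sigma> (Some (v,0)) = Some (\<phi> v, 0) \<and> \<phi> v \<in> VH" if "v \<in> VH" for v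
    using l0[OF that] that unfolding \<phi>_def by auto
  have phi2: "\<phi> v = v" if "v \<notin> VH" for v using that unfolding \<phi>_def by simp
  have v0M: "Some (v,0) \<in> verts M" if "v \<in> VH" for v using VHG[OF that] memS by simp
  have phiinj: "inj_on \<phi> (verts G)"
  proof (rule inj_onI)
    fix x y assume xy: "x \<in> verts G" "y \<in> verts G" "\<phi> x = \<phi> y"
    show "x = y"
    proof (cases "x \<in> VH"; cases "y \<in> VH")
      assume "x \<in> VH" "y \<in> VH"
      then show ?thesis using phi1 injD[OF v0M v0M] xy(3) by (metis prod.inject option.inject)
    next
      assume a: "x \<in> VH" "y \<notin> VH"
      have "\<phi> x \<in> VH" using phi1[OF a(1)] by blast
      moreover have "\<phi> y = z" using phi2[OF a(2)] a(2) xy(2) unfolding VH_def by blast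
      ultimately show ?thesis using xy(3) VHG by metis
    next
      assume a: "x \<notin> VH" "y \<in> VH"
      have "\<phi> y \<in> VH" using phi1[OF a(2)] by blast
      moreover have "\<phi> x = z" using phi2[OF a(1)] a(1) xy(1) unfolding VH_def by blast
      ultimately show ?thesis using xy(3) VHG by metis
    next
      assume "x \<notin> VH" "y \<notin> VH"
      then show ?thesis using phi2 xy by metis
    qed
  qed
  have phisub: "\<phi> ` verts G \<subseteq> verts G"
  proof
    fix w assume "w \<in> \<phi> ` verts G"
    then obtain v where v: "v \<in> verts G" "w = \<phi> v" by blast
    show "w \<in> verts G"
    proof (cases "v \<in> VH")
      case True then show ?thesis using phi1[OF True] VHG v(2) by blast
    next
      case False then show ?thesis using phi2[OF False] v by simp
    qed
  qed
  have phiim: "\<phi> ` verts G = verts G" using endo_inj_surj[OF finG phisub phiinj] .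
  have phiadj: "adj G (\<phi> x) (\<phi> y) \<longleftrightarrow> adj G x y" if "x \<in> verts G" "y \<in> verts G" for x y
  proof (cases "x \<in> VH \<and> y \<in> VH")
    case True
    then have "adj M (\<sigma> (Some (x,0))) (\<sigma> (Some (y,0))) \<longleftrightarrow> adj M (Some (x,0)) (Some (y,0))"
      using ap v0M by blast
    then show ?thesis using True phi1 SS unfolding adj_def by simp
  next
    case False
    then have "x = z \<or> y = z" using that unfolding VH_def by auto
    then have "(\<phi> x = z \<or> \<phi> y = z)" using phi2 unfolding VH_def by auto
    then show ?thesis using \<open>x = z \<or> y = z\<close> ez unfolding adj_def by auto
  qed
  have phiaut: "automorphism G \<phi>" unfolding automorphism_def bij_betw_def
    using phiinj phiim phiadj by blast
  have phifixD: "\<forall>v\<in>D. \<phi> v = v"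
  proof
    fix v assume v: "v \<in> D"
    show "\<phi> v = v"
    proof (cases "v \<in> VH")
      case True
      then have "v \<in> D - {z}" using v unfolding VH_def by auto
      then have "\<sigma> (Some (v,0)) = Some (v,0)" using fixS by blast
      then show ?thesis using phi1[OF True] by simp
    qed (rule phi2)
  qed
  have phiid: "\<forall>v\<in>verts G. \<phi> v = v" using D phiaut phifixD unfolding determining_set_def by blast
  have lev: "\<forall>v\<in>VH. \<sigma> (Some (v,s)) = Some (v,s)" if "s \<le> t" for s
    using that
  proof (induction s)
    case 0
    then show ?case using phi1 phiid VHG by metis
  next
    case (Suc s)
    show ?case
    proof
      fix v assume v: "v \<in> VH"
      have IH: "\<forall>v\<in>VH. \<sigma> (Some (v,s)) = Some (v,s)" using Suc by simp
      have "\<sigma> (Some (v, Suc s)) \<in> L (Suc s)" using ontoall[OF Suc.prems] v unfolding L_def by blast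
      then obtain v' where v': "v' \<in> VH" "\<sigma> (Some (v, Suc s)) = Some (v', Suc s)" unfolding L_def by auto
      have vM: "Some (v, Suc s) \<in> verts M" using VHG[OF v] memS Suc.prems by simp
      have "open_nbhd G v = open_nbhd G v'"
        unfolding open_nbhd_def
      proof (intro Collect_cong conj_cong refl)
        fix y assume yG: "y \<in> verts G"
        show "adj G v y \<longleftrightarrow> adj G v' y"
        proof (cases "y = z")
          case True then show ?thesis using ez unfolding adj_def by simp
        next
          case False
          then have yH: "y \<in> VH" using yG unfolding VH_def by simp
          have yM: "Some (y, s) \<in> verts M" using yG memS Suc.prems by simp
          have "adj G v y \<longleftrightarrow> adj M (Some (v, Suc s)) (Some (y,s))"
            using SS Suc.prems unfolding adj_def by simp
          also have "\<dots> \<longleftrightarrow> adj M (\<sigma> (Some (v, Suc s))) (\<sigma> (Some (y,s)))" using ap[OF vM yM] by simp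
          also have "\<dots> \<longleftrightarrow> adj M (Some (v', Suc s)) (Some (y,s))" using v' IH yH by simp
          also have "\<dots> \<longleftrightarrow> adj G v' y" using SS Suc.prems unfolding adj_def by simp
          finally show ?thesis .
        qed
      qed
      then have "v = v'" using tf VHG[OF v] VHG[OF v'(1)] unfolding twin_free_def by blast
      then show "\<sigma> (Some (v, Suc s)) = Some (v, Suc s)" using v' by simp
    qed
  qed
  have other: "\<sigma> x = x" if "x \<in> verts M" "x \<noteq> Some (z,0)" for x
  proof (cases x)
    case None then show ?thesis using sN by simp
  next
    case (Some p)
    then obtain u r where ur: "x = Some (u,r)" by (cases p) auto
    then have u: "u \<in> verts G" "r \<le> t" using that memS by auto
    show ?thesis
    proof (cases "u = z")
      case False
      then show ?thesis using lev[OF u(2)] u ur unfolding VH_def by auto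
    next
      case True
      show ?thesis
      proof (cases "r = t")
        case True then show ?thesis using sP ur \<open>u = z\<close> unfolding P_def by simp
      next
        case False
        then have "x \<in> Some ` ({z} \<times> {1..<t})" using ur \<open>u = z\<close> that(2) u by auto
        then show ?thesis using fixS by blast
      qed
    qed
  qed
  have z0M: "Some (z,0) \<in> verts M" using z memS by simp
  have "\<sigma> (Some (z,0)) = Some (z,0)"
  proof (rule ccontr)
    assume ne0: "\<sigma> (Some (z,0)) \<noteq> Some (z,0)"
    have yM: "\<sigma> (Some (z,0)) \<in> verts M" using inM[OF z0M] .
    then have "\<sigma> (\<sigma> (Some (z,0))) = \<sigma> (Some (z,0))" using other ne0 by blast
    then have "\<sigma> (Some (z,0)) = Some (z,0)" using injD[OF yM z0M] by blast
    then show False using ne0 by simp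
  qed
  then have "\<forall>x\<in>verts M. \<sigma> x = x" using other by metis
  then show ?thesis by (simp add: M_def)
qed




lemma iso_card:
  fixes G :: "'a graph"
  assumes simple: "simple_graph G" and z: "z \<in> verts G" and zi: "\<forall>e\<in>edges G. z \<notin> e"
    and S: "determining_set (mycielskian t G) S"
  shows "t \<le> card (Some ` ({z} \<times> {..<t}) \<inter> S) + 1"
proof -
  define I where "I = Some ` ({z} \<times> {..<t})"
  have ez: "{z,y} \<notin> edges G" for y using zi by auto
  have IM: "I \<subseteq> verts (mycielskian t G)" unfolding I_def verts_myc using z by auto
  have iso: "\<not> adj (mycielskian t G) i y" if "i \<in> I" for i y
  proof -
    have "i \<in> Some ` ({z} \<times> {..<t})" using that unfolding I_def by simp
    then obtain s where s: "i = Some (z,s)" "s < t" by auto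
    show ?thesis
    proof (cases y)
      case None then show ?thesis using s by (simp add: adj_myc_SN)
    next
      case (Some p)
      then obtain u r where "y = Some (u,r)" by (cases p) auto
      then show ?thesis using s ez[of u] by (simp add: adj_myc_SS)
    qed
  qed
  have one: "i = j" if "i \<in> I - S" "j \<in> I - S" for i j
  proof (rule ccontr)
    assume "i \<noteq> j"
    have i: "i \<in> I" "i \<notin> S" and j: "j \<in> I" "j \<notin> S" using that by auto
    show False
    proof (rule swap_det[OF S, of i j])
      show "i \<in> verts (mycielskian t G)" "j \<in> verts (mycielskian t G)" using i(1) j(1) IM by auto
      show "i \<notin> S" "j \<notin> S" "i \<noteq> j" by fact+
      show "\<not> adj (mycielskian t G) x x" for x using myc_noloop[OF simple] .
      show "adj (mycielskian t G) i y \<longleftrightarrow> adj (mycielskian t G) j y" for y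
        using iso[OF i(1)] iso[OF j(1)] by simp
    qed
  qed
  have "inj_on Some ({z} \<times> {..<t})" by simp
  then have "card I = card ({z} \<times> {..<(t::nat)})" unfolding I_def by (rule card_image)
  also have "\<dots> = t" by (simp add: card_cartesian_product)
  finally have cI: "card I = t" .
  have fI: "finite I" unfolding I_def by auto
  have "card I \<le> card (I \<inter> S) + 1" using card_le1_miss[OF fI] one by blast
  then show ?thesis using cI unfolding I_def by simp
qed

lemma lower_ii:
  fixes G :: "'a graph"
  assumes simple: "simple_graph G" and tf: "twin_free G" and z: "z \<in> verts G"
    and zi: "\<forall>e\<in>edges G. z \<notin> e" and S: "determining_set (mycielskian t G) S"
  shows "det_num G + (t - 1) \<le> card S"
proof -
  define M where "M = mycielskian t G"
  define VH where "VH = verts G - {z}"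
  define I where "I = Some ` ({z} \<times> {..<t})"
  define A where "A = S \<inter> Some ` (VH \<times> UNIV)"
  define S' where "S' = (fst \<circ> the) ` A"
  have VM: "verts M = Some ` (verts G \<times> {..t}) \<union> {None}" unfolding M_def by (rule verts_myc)
  have memS: "Some (v,s) \<in> verts M \<longleftrightarrow> v \<in> verts G \<and> s \<le> t" for v s unfolding VM by auto
  have memN: "None \<in> verts M" unfolding VM by auto
  have SM: "S \<subseteq> verts M" using S unfolding determining_set_def M_def by simp
  have finM: "finite (verts M)" unfolding M_def using simple by (rule finite_myc)
  have finS: "finite S" using finite_subset[OF SM finM] .
  have SS: "adj M (Some (x,s)) (Some (y,r)) \<longleftrightarrow> {x,y} \<in> edges G \<and> ((s = 0 \<and> r = 0) \<or> (r = Suc s \<and> s < t) \<or> (s = Suc r \<and> r < t))" for x s y r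
    unfolding M_def by (rule adj_myc_SS)
  have SN: "adj M (Some (x,s)) None \<longleftrightarrow> s = t \<and> x \<in> verts G" for x s unfolding M_def by (rule adj_myc_SN)
  have NS: "adj M None (Some (x,s)) \<longleftrightarrow> s = t \<and> x \<in> verts G" for x s unfolding M_def by (rule adj_myc_NS)
  have NN: "\<not> adj M None None" unfolding M_def by (rule adj_myc_NN)
  have ez: "{z,y} \<notin> edges G" "{y,z} \<notin> edges G" for y using zi by auto
  have c1: "t \<le> card (I \<inter> S) + 1" unfolding I_def using iso_card[OF simple z zi S] .
  have c2: "card A + card (I \<inter> S) \<le> card S"
  proof -
    have "A \<inter> (I \<inter> S) = {}" unfolding A_def I_def VH_def by auto
    then have e1: "card (A \<union> (I \<inter> S)) = card A + card (I \<inter> S)"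
      using finS by (intro card_Un_disjoint) (auto simp: A_def)
    have e2: "A \<union> (I \<inter> S) \<subseteq> S" unfolding A_def by auto
    show ?thesis using card_mono[OF finS e2] e1 by simp
  qed
  have c3: "card S' \<le> card A" unfolding S'_def using finS A_def by (intro card_image_le) auto
  have S'VH: "S' \<subseteq> VH" unfolding S'_def A_def by auto
  have detS': "determining_set G S'"
    unfolding determining_set_def
  proof (intro conjI allI impI ballI)
    show "S' \<subseteq> verts G" using S'VH unfolding VH_def by auto
    fix \<phi> assume aut: "automorphism G \<phi>" and fx: "\<forall>x\<in>S'. \<phi> x = x"
    have bij: "bij_betw \<phi> (verts G) (verts G)" and ap: "\<And>x y. x \<in> verts G \<Longrightarrow> y \<in> verts G \<Longrightarrow> adj G (\<phi> x) (\<phi> y) \<longleftrightarrow> adj G x y"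
      using aut unfolding automorphism_def by auto
    have inj: "inj_on \<phi> (verts G)" and img: "\<phi> ` verts G = verts G" using bij by (auto simp: bij_betw_def)
    have inG: "\<phi> x \<in> verts G" if "x \<in> verts G" for x using that img by blast
    have pz: "\<phi> z = z"
    proof -
      have "open_nbhd G (\<phi> z) = {}"
      proof -
        have "\<not> adj G (\<phi> z) y" if "y \<in> verts G" for y
        proof
          assume a: "adj G (\<phi> z) y"
          have "y \<in> \<phi> ` verts G" using that img by simp
          then obtain y' where y': "y' \<in> verts G" "y = \<phi> y'" by (rule imageE) simp
          then have "adj G z y'" using ap[OF z y'(1)] a by simp
          then show False using ez unfolding adj_def by blast
        qed
        then show ?thesis unfolding open_nbhd_def by auto
      qed
      moreover have "open_nbhd G z = {}" unfolding open_nbhd_def adj_def using ez by auto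
      ultimately show ?thesis using tf inG[OF z] z unfolding twin_free_def by metis
    qed
    define \<sigma> :: "('a \<times> nat) option \<Rightarrow> ('a \<times> nat) option" where "\<sigma> = map_option (\<lambda>(v,s). (\<phi> v, s))"
    have sS: "\<sigma> (Some (v,s)) = Some (\<phi> v, s)" for v s unfolding \<sigma>_def by simp
    have sN: "\<sigma> None = None" unfolding \<sigma>_def by simp
    have "automorphism M \<sigma>"
      unfolding automorphism_def bij_betw_def
    proof (intro conjI ballI)
      show "inj_on \<sigma> (verts M)"
      proof (rule inj_onI)
        fix x y assume xy: "x \<in> verts M" "y \<in> verts M" "\<sigma> x = \<sigma> y"
        show "x = y"
        proof (cases x; cases y)
          fix p q assume pq: "x = Some p" "y = Some q"
          obtain u r where p: "p = (u,r)" by (cases p)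
          obtain u' r' where q: "q = (u',r')" by (cases q)
          have "u \<in> verts G" "u' \<in> verts G" using xy pq p q memS by auto
          moreover have "\<phi> u = \<phi> u'" "r = r'" using xy(3) pq p q sS by auto
          ultimately have "u = u'" using inj by (meson inj_onD)
          then show ?thesis using pq p q \<open>r = r'\<close> by simp
        next
          fix q assume a: "x = None" "y = Some q"
          then show ?thesis using xy(3) by (cases q) (simp add: sS sN)
        next
          fix q assume a: "x = Some q" "y = None"
          then show ?thesis using xy(3) by (cases q) (simp add: sS sN)
        next
          assume "x = None" "y = None" then show ?thesis by simp
        qed
      qed
      show "\<sigma> ` verts M = verts M"
      proof
        show "\<sigma> ` verts M \<subseteq> verts M"
        proof
          fix w assume "w \<in> \<sigma> ` verts M"
          then obtain x where x: "x \<in> verts M" "w = \<sigma> x" by (rule imageE) simp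
          show "w \<in> verts M"
          proof (cases x)
            case None then show ?thesis using x sN memN by simp
          next
            case (Some p)
            then obtain u r where ur: "x = Some (u,r)" by (cases p) auto
            then have "u \<in> verts G" "r \<le> t" using x memS by auto
            then show ?thesis using x ur sS memS inG by simp
          qed
        qed
        show "verts M \<subseteq> \<sigma> ` verts M"
        proof
          fix x assume x: "x \<in> verts M"
          show "x \<in> \<sigma> ` verts M"
          proof (cases x)
            case None show ?thesis unfolding None by (rule image_eqI[OF _ memN]) (simp add: sN)
          next
            case (Some p)
            then obtain u r where ur: "x = Some (u,r)" by (cases p) auto
            then have "u \<in> verts G" "r \<le> t" using x memS by auto
            then have "u \<in> \<phi> ` verts G" using img by simp
            then obtain u' where u': "u' \<in> verts G" "u = \<phi> u'" by (rule imageE) simp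
            then have "Some (u', r) \<in> verts M" using memS \<open>r \<le> t\<close> by simp
            moreover have "x = \<sigma> (Some (u', r))" using ur u' sS by simp
            ultimately show ?thesis by blast
          qed
        qed
      qed
      fix x y assume x: "x \<in> verts M" and y: "y \<in> verts M"
      show "adj M (\<sigma> x) (\<sigma> y) \<longleftrightarrow> adj M x y"
      proof (cases x)
        case None
        show ?thesis
        proof (cases y)
          case None2: None
          show ?thesis unfolding None None2 sN using NN by simp
        next
          case (Some q)
          obtain u r where q: "q = (u,r)" by (cases q)
          have uG: "u \<in> verts G" using y Some q memS by simp
          have "\<phi> u \<in> verts G" using inG[OF uG] .
          then show ?thesis unfolding None Some q sN sS NS using uG by simp
        qed
      next
        case (Some p)
        obtain u r where p: "p = (u,r)" by (cases p)
        have uG: "u \<in> verts G" using x Some p memS by simp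
        show ?thesis
        proof (cases y)
          case None
          have "\<phi> u \<in> verts G" using inG[OF uG] .
          then show ?thesis unfolding None Some p sN sS SN using uG by simp
        next
          case Some2: (Some q)
          obtain u' r' where q: "q = (u',r')" by (cases q)
          have uG': "u' \<in> verts G" using y Some2 q memS by simp
          have e: "{\<phi> u, \<phi> u'} \<in> edges G \<longleftrightarrow> {u,u'} \<in> edges G"
            using ap[OF uG uG'] unfolding adj_def .
          show ?thesis unfolding Some Some2 p q sS SS e ..
        qed
      qed
    qed
    moreover have "\<forall>x\<in>S. \<sigma> x = x"
    proof
      fix x assume xS: "x \<in> S"
      show "\<sigma> x = x"
      proof (cases x)
        case None then show ?thesis using sN by simp
      next
        case (Some p)
        then obtain u r where ur: "x = Some (u,r)" by (cases p) auto
        then have uG: "u \<in> verts G" using xS SM memS by auto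
        show ?thesis
        proof (cases "u = z")
          case True then show ?thesis using ur pz sS by simp
        next
          case False
          then have "x \<in> A" using xS ur uG unfolding A_def VH_def by auto
          then have "u \<in> S'" unfolding S'_def using ur by force
          then show ?thesis using fx ur sS by simp
        qed
      qed
    qed
    ultimately have all: "\<forall>x\<in>verts M. \<sigma> x = x" using S unfolding determining_set_def M_def by blast
    fix x assume "x \<in> verts G"
    then have "Some (x,0) \<in> verts M" using memS by simp
    then show "\<phi> x = x" using all sS by force
  qed
  have "det_num G \<le> card S'" by (rule det_le[OF detS'])
  then show ?thesis using c1 c2 c3 by linarith
qed




lemma part_i:
  fixes G :: "'a graph"
  assumes simple: "simple_graph G" and Va: "verts G = {a}" and t: "1 \<le> t"
  shows "det_num G = 0 \<and> det_num (mycielskian t G) = t"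
proof -
  define M where "M = mycielskian t G"
  have E: "edges G = {}"
  proof (rule ccontr)
    assume "edges G \<noteq> {}"
    then obtain e where "e \<in> edges G" by auto
    then obtain x y where "x \<noteq> y" "x \<in> verts G" "y \<in> verts G" using simple unfolding simple_graph_def by blast
    then show False using Va by simp
  qed
  have VM: "verts M = Some ` (verts G \<times> {..t}) \<union> {None}" unfolding M_def by (rule verts_myc)
  have memS: "Some (v,s) \<in> verts M \<longleftrightarrow> v = a \<and> s \<le> t" for v s unfolding VM Va by auto
  have memN: "None \<in> verts M" unfolding VM by auto
  have finM: "finite (verts M)" unfolding M_def using simple by (rule finite_myc)
  have SS: "\<not> adj M (Some (x,s)) (Some (y,r))" for x s y r unfolding M_def adj_myc_SS E by simp
  have SN: "adj M (Some (x,s)) None \<longleftrightarrow> s = t \<and> x = a" for x s unfolding M_def adj_myc_SN Va by simp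
  have NS: "adj M None (Some (x,s)) \<longleftrightarrow> s = t \<and> x = a" for x s unfolding M_def adj_myc_NS Va by simp
  have NN: "\<not> adj M None None" unfolding M_def by (rule adj_myc_NN)
  have g0: "det_num G = 0"
  proof -
    have "determining_set G {}" unfolding determining_set_def
    proof (intro conjI allI impI ballI)
      fix f x assume "automorphism G f" "x \<in> verts G"
      then have "f ` {a} = {a}" "x = a" using Va unfolding automorphism_def bij_betw_def by auto
      then show "f x = x" by simp
    qed simp
    then show ?thesis using det_le[of G "{}"] by simp
  qed
  define P where "P = Some (a,t)"
  have PM: "P \<in> verts M" unfolding P_def memS by simp
  define S1 where "S1 = Some ` ({a} \<times> {1..t})"
  have dS1: "determining_set M S1" unfolding determining_set_def
  proof (intro conjI allI impI ballI)
    show "S1 \<subseteq> verts M" unfolding S1_def VM Va by auto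
    fix \<sigma> x assume aut: "automorphism M \<sigma>" and fx: "\<forall>x\<in>S1. \<sigma> x = x" and x: "x \<in> verts M"
    have inj: "inj_on \<sigma> (verts M)" and img: "\<sigma> ` verts M = verts M"
      and ap: "\<And>x y. x \<in> verts M \<Longrightarrow> y \<in> verts M \<Longrightarrow> adj M (\<sigma> x) (\<sigma> y) \<longleftrightarrow> adj M x y"
      using aut unfolding automorphism_def bij_betw_def by auto
    have inM: "\<sigma> y \<in> verts M" if "y \<in> verts M" for y using that img by auto
    have sP: "\<sigma> P = P" using fx t unfolding S1_def P_def by auto
    have "adj M P (\<sigma> None)" using ap[OF PM memN] sP SN unfolding P_def by simp
    then have sN: "\<sigma> None = None" using inM[OF memN] SS unfolding P_def by (cases "\<sigma> None") auto
    have other: "\<sigma> y = y" if "y \<in> verts M" "y \<noteq> Some (a,0)" for y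
    proof (cases y)
      case None then show ?thesis using sN by simp
    next
      case (Some p)
      then obtain u r where ur: "y = Some (u,r)" by (cases p) auto
      then have "u = a" "r \<le> t" "r \<noteq> 0" using that memS by auto
      then have "y \<in> S1" unfolding S1_def using ur by auto
      then show ?thesis using fx by blast
    qed
    have z0M: "Some (a,0) \<in> verts M" using memS by simp
    have "\<sigma> (Some (a,0)) = Some (a,0)"
    proof (rule ccontr)
      assume ne0: "\<sigma> (Some (a,0)) \<noteq> Some (a,0)"
      have yM: "\<sigma> (Some (a,0)) \<in> verts M" using inM[OF z0M] .
      then have "\<sigma> (\<sigma> (Some (a,0))) = \<sigma> (Some (a,0))" using other ne0 by simp
      then have "\<sigma> (Some (a,0)) = Some (a,0)" using inj yM z0M by (meson inj_onD)
      then show False using ne0 by simp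
    qed
    then show "\<sigma> x = x" using other x by (cases "x = Some (a,0)") auto
  qed
  have cS1: "card S1 = t"
  proof -
    have "inj_on Some ({a} \<times> {1..t})" by simp
    then have "card S1 = card ({a} \<times> {1..(t::nat)})" unfolding S1_def by (rule card_image)
    also have "\<dots> = t" by (simp add: card_cartesian_product)
    finally show ?thesis .
  qed
  have up: "det_num M \<le> t" using det_le[OF dS1] cS1 by simp
  obtain S where S: "determining_set M S" "card S = det_num M" using det_ex by blast
  have SM: "S \<subseteq> verts M" using S(1) unfolding determining_set_def by simp
  have finS: "finite S" using finite_subset[OF SM finM] .
  define I where "I = Some ` ({a} \<times> {..<t})"
  have c1: "t \<le> card (I \<inter> S) + 1" unfolding I_def
    using iso_card[OF simple _ _ S(1)[unfolded M_def]] Va E by simp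
  have PN: "P \<in> S \<or> None \<in> S"
  proof (rule ccontr)
    assume nn: "\<not> (P \<in> S \<or> None \<in> S)"
    show False
    proof (rule swap_det[OF S(1), of P None])
      show "P \<in> verts M" "None \<in> verts M" by (fact PM, fact memN)
      show "P \<notin> S" "None \<notin> S" using nn by auto
      show "P \<noteq> None" unfolding P_def by simp
      show "\<not> adj M x x" for x unfolding M_def using myc_noloop[OF simple] .
      show "adj M P y \<longleftrightarrow> adj M None y" if yy: "y \<in> verts M" "y \<noteq> P" "y \<noteq> None" for y
      proof -
        obtain p where "y = Some p" using yy(3) by auto
        then obtain u r where ur: "y = Some (u,r)" by (cases p) auto
        then have "r \<noteq> t" using yy(2) memS yy(1) unfolding P_def by auto
        then show ?thesis using ur SS NS unfolding P_def by simp
      qed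
    qed
  qed
  have c2: "card (I \<inter> S) + 1 \<le> card S"
  proof -
    obtain q where q: "q \<in> S" "q = P \<or> q = None" using PN by blast
    have "q \<notin> I \<inter> S" using q unfolding I_def P_def by auto
    then have "insert q (I \<inter> S) \<subseteq> S" "q \<notin> I \<inter> S" using q by auto
    then show ?thesis using card_mono[OF finS] finite_subset[of "I \<inter> S" S] finS
      by (metis card_insert_disjoint Suc_eq_plus1 inf_le2)
  qed
  have "t \<le> det_num M" using c1 c2 S(2) by linarith
  then show ?thesis using g0 up unfolding M_def by simp
qed




lemma part_ii:
  fixes G :: "'a graph"
  assumes simple: "simple_graph G" and tf: "twin_free G" and z: "z \<in> verts G"
    and zi: "\<forall>e\<in>edges G. z \<notin> e" and ne: "edges G \<noteq> {}" and t: "1 \<le> t"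
  shows "det_num (mycielskian t G) = det_num G + t - 1"
proof -
  obtain D where D: "determining_set G D" "card D = det_num G" using det_ex by blast
  have DG: "D \<subseteq> verts G" using D(1) unfolding determining_set_def by simp
  have finG: "finite (verts G)" using simple unfolding simple_graph_def by simp
  have finD: "finite D" using finite_subset[OF DG finG] .
  define S0 where "S0 = Some ` ((D - {z}) \<times> {0::nat}) \<union> Some ` ({z} \<times> {1..<t})"
  have dS0: "determining_set (mycielskian t G) S0" unfolding determining_set_def
  proof (intro conjI allI impI)
    show "S0 \<subseteq> verts (mycielskian t G)" unfolding S0_def verts_myc using DG z by auto
    fix \<sigma> assume "automorphism (mycielskian t G) \<sigma>" "\<forall>x\<in>S0. \<sigma> x = x"
    then show "\<forall>x\<in>verts (mycielskian t G). \<sigma> x = x"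
      using upper_fix[OF simple tf z zi ne t D(1)] unfolding S0_def by blast
  qed
  have "card S0 \<le> card (Some ` ((D - {z}) \<times> {0::nat})) + card (Some ` ({z} \<times> {1..<t}))"
    unfolding S0_def by (rule card_Un_le)
  also have "\<dots> \<le> card ((D - {z}) \<times> {0::nat}) + card ({z} \<times> {1..<t})"
    by (intro add_mono card_image_le) (use finD in auto)
  also have "\<dots> \<le> card D + (t - 1)"
    using card_Diff1_le[of D z] by (simp add: card_cartesian_product)
  finally have up: "det_num (mycielskian t G) \<le> det_num G + (t - 1)"
    using det_le[OF dS0] D(2) by linarith
  obtain S where S: "determining_set (mycielskian t G) S" "card S = det_num (mycielskian t G)"
    using det_ex by blast
  have "det_num G + (t - 1) \<le> det_num (mycielskian t G)"
    using lower_ii[OF simple tf z zi S(1)] S(2) by simp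
  then show ?thesis using up t by linarith
qed

theorem mainTheorem2:
  fixes G :: "'a graph" and t :: nat
  assumes "simple_graph G" and "twin_free G" and "t \<ge> 1"
  shows "(card (verts G) = 1 \<longrightarrow>
            det_num G = 0 \<and> det_num (mycielskian t G) = t)
       \<and> ((\<exists>z\<in>verts G. (\<forall>e\<in>edges G. z \<notin> e) \<and> edges G \<noteq> {}) \<longrightarrow>
            det_num (mycielskian t G) = det_num G + t - 1)"
proof (rule conjI; rule impI)
  assume "card (verts G) = 1"
  then obtain a where "verts G = {a}" by (auto simp: card_1_singleton_iff)
  then show "det_num G = 0 \<and> det_num (mycielskian t G) = t"
    using part_i[OF assms(1)] assms(3) by blast
next
  assume "\<exists>z\<in>verts G. (\<forall>e\<in>edges G. z \<notin> e) \<and> edges G \<noteq> {}"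
  then obtain z where "z \<in> verts G" "\<forall>e\<in>edges G. z \<notin> e" "edges G \<noteq> {}" by blast
  then show "det_num (mycielskian t G) = det_num G + t - 1"
    using part_ii[OF assms(1,2)] assms(3) by blast
qed


end
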